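(* For any boolean function $f:\{0,1\}^n\to\{0,1\}$, \[ Q_E^{na}(f)=\min_{x\in\{0,1\}^n}\max_{y\in S_f^\perp} d(x,y), \] i.e.\ $Q_E^{na}(f)$ equals the covering radius of the binary linear code $S_f^\perp$.
   Context: Addition of bit strings is in $\mathbb Z_2^n$ (bitwise mod 2). $S_f:=\{z\in\{0,1\}^n: f(x)=f(x+z)\ \text{for all } x\}$, a subspace of $\mathbb F_2^n$. For a subspace $S$, $S^\perp=\{x: x\cdot s=0 \text{ for all } s\in S\}$, with $x\cdot s=\sum_i x_is_i \bmod 2$. $d(x,y)$ is the Hamming distance. Nonadaptive exact quantum query model: let $\mathcal H_{\rm in}$ have orthonormal basis $|0\rangle,\dots,|n\rangle$ and let the oracle $O_x$ act by $|i\rangle\mapsto(-1)^{x_i}|i\rangle$ with convention $x_0=0$. A nonadaptive quantum algorithm making $k$ queries consists of an input-independent state $|\psi\rangle\in\mathcal H_{\rm in}^{\otimes k}\otimes\mathcal H_{\rm work}$ (with $\mathcal H_{\rm work}$ a finite-dimensional workspace), to which $O_x^{\otimes k}\otimes I$ is applied, followed by an input-independent two-outcome measurement with outcomes labelled $0,1$. It computes $f$ exactly if for every $x$ the outcome is $f(x)$ with probability $1$. $Q_E^{na}(f)$ is the minimum such $k$. *)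

theory Defs
  imports Complex_Main
begin

(* Bit strings of length n are bool lists of length n; bit i (1-based) of x is x ! (i-1). *)

definition xor_bits :: "bool list \<Rightarrow> bool list \<Rightarrow> bool list" where
  "xor_bits x z = map2 (\<noteq>) x z"

definition dot_bits :: "bool list \<Rightarrow> bool list \<Rightarrow> bool" where
  "dot_bits x s = odd (card {i. i < length x \<and> x ! i \<and> s ! i})"

definition hamming :: "bool list \<Rightarrow> bool list \<Rightarrow> nat" where
  "hamming x y = card {i. i < length x \<and> x ! i \<noteq> y ! i}"

definition bitstrings :: "nat \<Rightarrow> bool list set" where
  "bitstrings n = {x. length x = n}"

definition S_f :: "nat \<Rightarrow> (bool list \<Rightarrow> bool) \<Rightarrow> bool list set" where
  "S_f n f = {z \<in> bitstrings n. \<forall>x \<in> bitstrings n. f x = f (xor_bits x z)}"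

definition perp :: "nat \<Rightarrow> bool list set \<Rightarrow> bool list set" where
  "perp n S = {x \<in> bitstrings n. \<forall>s \<in> S. \<not> dot_bits x s}"

definition covering_radius :: "nat \<Rightarrow> bool list set \<Rightarrow> nat" where
  "covering_radius n C = Min ((\<lambda>x. Max ((\<lambda>y. hamming x y) ` C)) ` bitstrings n)"

(* Oracle phase on basis state |i>, i \<in> {0..n}, convention x_0 = 0 *)
definition query_sign :: "bool list \<Rightarrow> nat \<Rightarrow> complex" where
  "query_sign x i = (if i = 0 then 1 else if x ! (i - 1) then -1 else 1)"

(* Orthonormal basis of H_in^{\<otimes>k} \<otimes> H_work, dim H_work = m:
   |i_1,...,i_k> \<otimes> |w>, with i_j \<in> {0..n}, w < m *)
definition basis_idx :: "nat \<Rightarrow> nat \<Rightarrow> nat \<Rightarrow> (nat list \<times> nat) set" where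
  "basis_idx n k m = {(is, w). length is = k \<and> (\<forall>i \<in> set is. i \<le> n) \<and> w < m}"

definition cinner :: "'a set \<Rightarrow> ('a \<Rightarrow> complex) \<Rightarrow> ('a \<Rightarrow> complex) \<Rightarrow> complex" where
  "cinner A u v = (\<Sum>j\<in>A. cnj (u j) * v j)"

definition mat_app :: "'a set \<Rightarrow> ('a \<Rightarrow> 'a \<Rightarrow> complex) \<Rightarrow> ('a \<Rightarrow> complex) \<Rightarrow> ('a \<Rightarrow> complex)" where
  "mat_app A E v = (\<lambda>j. \<Sum>l\<in>A. E j l * v l)"

definition psd :: "'a set \<Rightarrow> ('a \<Rightarrow> 'a \<Rightarrow> complex) \<Rightarrow> bool" where
  "psd A E = (\<forall>v. Im (cinner A v (mat_app A E v)) = 0 \<and> Re (cinner A v (mat_app A E v)) \<ge> 0)"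

(* O_x^{\<otimes>k} \<otimes> I applied to \<psi> *)
definition oracle_apply :: "bool list \<Rightarrow> (nat list \<times> nat \<Rightarrow> complex) \<Rightarrow> (nat list \<times> nat \<Rightarrow> complex)" where
  "oracle_apply x \<psi> = (\<lambda>(is, w). (\<Prod>i\<leftarrow>is. query_sign x i) * \<psi> (is, w))"

(* A k-query nonadaptive algorithm computing f exactly exists.  The two-outcome
   measurement is a general POVM {I - E, E}; E is the effect for outcome 1 (= True). *)
definition na_exact_computes :: "nat \<Rightarrow> (bool list \<Rightarrow> bool) \<Rightarrow> nat \<Rightarrow> bool" where
  "na_exact_computes n f k =
    (\<exists>m \<psi> E.
       let A = basis_idx n k m in
       cinner A \<psi> \<psi> = 1 \<and>
       psd A E \<and>
       psd A (\<lambda>j l. (if j = l then 1 else 0) - E j l) \<and>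
       (\<forall>x \<in> bitstrings n.
          cinner A (oracle_apply x \<psi>) (mat_app A E (oracle_apply x \<psi>)) = (if f x then 1 else 0)))"

definition QE_na :: "nat \<Rightarrow> (bool list \<Rightarrow> bool) \<Rightarrow> nat" where
  "QE_na n f = (LEAST k. na_exact_computes n f k)"

end

theory Submission
  imports Defs
begin

definition supp :: "bool list \<Rightarrow> nat set" where
  "supp x = {i. i < length x \<and> x ! i}"
definition mk :: "nat \<Rightarrow> nat set \<Rightarrow> bool list" where
  "mk n X = map (\<lambda>i. i \<in> X) [0..<n]"
definition sd :: "nat set \<Rightarrow> nat set \<Rightarrow> nat set" where
  "sd A B = (A - B) \<union> (B - A)"
definition chi :: "nat set \<Rightarrow> nat set \<Rightarrow> real" where
  "chi A B = (-1) ^ card (A \<inter> B)"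

lemma supp_sub: "supp x \<subseteq> {..<length x}" by (auto simp: supp_def)
lemma finite_supp[simp]: "finite (supp x)" by (rule finite_subset[OF supp_sub]) auto
lemma mk_supp: "length x = n \<Longrightarrow> mk n (supp x) = x"
  by (auto simp: mk_def supp_def intro!: nth_equalityI)
lemma supp_mk: "X \<subseteq> {..<n} \<Longrightarrow> supp (mk n X) = X"
  by (auto simp: mk_def supp_def)
lemma length_mk[simp]: "length (mk n X) = n" by (simp add: mk_def)
lemma supp_inj: "length x = length y \<Longrightarrow> supp x = supp y \<Longrightarrow> x = y"
  by (metis mk_supp)
lemma length_xor[simp]: "length (xor_bits x z) = min (length x) (length z)"
  by (simp add: xor_bits_def)
lemma supp_xor: "length x = length z \<Longrightarrow> supp (xor_bits x z) = sd (supp x) (supp z)"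
  by (auto simp: supp_def sd_def xor_bits_def)
lemma dot_supp: "length x = length s \<Longrightarrow> dot_bits x s \<longleftrightarrow> odd (card (supp x \<inter> supp s))"
  unfolding dot_bits_def supp_def by (rule arg_cong[where f="\<lambda>A. odd (card A)"]) auto
lemma hamming_supp: "length x = length y \<Longrightarrow> hamming x y = card (sd (supp x) (supp y))"
  unfolding hamming_def supp_def sd_def by (rule arg_cong[where f=card]) auto
lemma xor_assoc: "length x = length y \<Longrightarrow> length y = length z \<Longrightarrow>
   xor_bits (xor_bits x y) z = xor_bits x (xor_bits y z)"
  by (auto simp: xor_bits_def intro!: nth_equalityI)
lemma xor_cancel: "length x = length y \<Longrightarrow> xor_bits x (xor_bits x y) = y"
  by (auto simp: xor_bits_def intro!: nth_equalityI)
lemma xor_comm: "xor_bits x y = xor_bits y x"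
  by (auto simp: xor_bits_def intro!: nth_equalityI)

lemma sd_comm: "sd A B = sd B A" by (auto simp: sd_def)
lemma sd_cancel: "sd A (sd A B) = B" by (auto simp: sd_def)
lemma sd_empty_iff: "sd A B = {} \<longleftrightarrow> A = B" by (auto simp: sd_def)
lemma sd_sub: "A \<subseteq> N \<Longrightarrow> B \<subseteq> N \<Longrightarrow> sd A B \<subseteq> N" by (auto simp: sd_def)
lemma sd_self[simp]: "sd A A = {}" by (auto simp: sd_def)
lemma sd_empty[simp]: "sd A {} = A" "sd {} A = A" by (auto simp: sd_def)

lemma card_sd_parity:
  assumes "finite P" "finite Q"
  shows "(-1::real) ^ card (sd P Q) = (-1) ^ card P * (-1) ^ card Q"
proof -
  have a: "card P = card (P - Q) + card (P \<inter> Q)"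
    using assms by (metis Diff_Diff_Int card_Diff_subset_Int card_mono finite_Diff Int_lower1
        Diff_subset inf.commute le_add_diff_inverse2 card_Diff_subset Diff_Int2 Int_absorb2
        add.commute)
  have b: "card Q = card (Q - P) + card (P \<inter> Q)"
    using assms by (metis Int_commute Diff_Diff_Int card_Diff_subset_Int card_mono finite_Diff Int_lower1
        Diff_subset le_add_diff_inverse2 card_Diff_subset add.commute)
  have c: "card (sd P Q) = card (P - Q) + card (Q - P)"
    unfolding sd_def using assms by (intro card_Un_disjoint) auto
  have sq: "((-1::real)^(card (P \<inter> Q)))^2 = 1"
    by (simp add: power_mult[symmetric])
  have "(-1::real) ^ card P * (-1) ^ card Q = (-1) ^ (card (P - Q) + card (Q - P)) * ((-1)^(card (P \<inter> Q)))^2"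
    unfolding a b by (simp add: power_add power2_eq_square)
  thus ?thesis using sq c by simp
qed

lemma chi_comm: "chi A B = chi B A" by (simp add: chi_def Int_commute)
lemma chi_sd: "finite B \<Longrightarrow> finite C \<Longrightarrow> chi A (sd B C) = chi A B * chi A C"
proof -
  assume "finite B" "finite C"
  have "A \<inter> sd B C = sd (A \<inter> B) (A \<inter> C)" by (auto simp: sd_def)
  thus ?thesis unfolding chi_def using card_sd_parity[of "A \<inter> B" "A \<inter> C"] \<open>finite B\<close> \<open>finite C\<close> by simp
qed
lemma chi_sd1: "finite B \<Longrightarrow> finite C \<Longrightarrow> chi (sd B C) A = chi B A * chi C A"
  by (simp add: chi_comm chi_sd)
lemma chi_sq: "chi A B * chi A B = 1"
  by (simp add: chi_def flip: power_add)
lemma chi_empty[simp]: "chi A {} = 1" "chi {} A = 1" by (auto simp: chi_def)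
lemma chi_pm: "chi A B = 1 \<or> chi A B = -1" by (simp add: chi_def minus_one_power_iff)
lemma chi_one_iff: "chi A B = 1 \<longleftrightarrow> even (card (A \<inter> B))"
  by (simp add: chi_def minus_one_power_iff)


lemma sd_cancel2: "sd (sd a b) b = a" by (auto simp: sd_def)
lemma finite_sd[simp]: "finite A \<Longrightarrow> finite B \<Longrightarrow> finite (sd A B)" by (simp add: sd_def)

lemma char_sum_zero:
  assumes "finite G" "\<forall>a\<in>G. \<forall>b\<in>G. sd a b \<in> G" "W0 \<in> G" "chi W0 Y = -1" "\<forall>W\<in>G. finite W"
  shows "(\<Sum>W\<in>G. chi W Y) = 0"
proof -
  have "(\<Sum>W\<in>G. chi W Y) = (\<Sum>W\<in>G. chi (sd W W0) Y)"
    by (rule sum.reindex_bij_witness[of _ "\<lambda>W. sd W W0" "\<lambda>W. sd W W0"])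
       (use assms in \<open>auto simp: sd_cancel2\<close>)
  also have "\<dots> = (\<Sum>W\<in>G. - chi W Y)"
    using assms by (intro sum.cong) (auto simp: chi_sd1)
  finally show ?thesis by (simp add: sum_negf)
qed

lemma pow_orth:
  assumes "finite N" "Y \<subseteq> N"
  shows "(\<Sum>Z\<in>Pow N. chi Z Y) = (if Y = {} then 2 ^ card N else 0)"
proof (cases "Y = {}")
  case True
  thus ?thesis using assms by (simp add: card_Pow)
next
  case False
  then obtain a where a: "a \<in> Y" by auto
  have "chi {a} Y = -1" using a by (simp add: chi_def)
  hence "(\<Sum>Z\<in>Pow N. chi Z Y) = 0"
    using assms a by (intro char_sum_zero) (auto simp: sd_def intro: finite_subset)
  thus ?thesis using False by simp
qed


lemma bitstrings_eq: "bitstrings n = mk n ` Pow {..<n}"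
proof
  show "bitstrings n \<subseteq> mk n ` Pow {..<n}"
  proof
    fix x assume "x \<in> bitstrings n"
    hence "length x = n" by (simp add: bitstrings_def)
    hence "x = mk n (supp x)" by (simp add: mk_supp)
    moreover have "supp x \<in> Pow {..<n}" using supp_sub[of x] \<open>length x = n\<close> by auto
    ultimately show "x \<in> mk n ` Pow {..<n}" by (rule image_eqI)
  qed
qed (auto simp: bitstrings_def)

lemma finite_bitstrings[simp]: "finite (bitstrings n)"
  by (simp add: bitstrings_eq)

lemma sum_bits: "(\<Sum>x\<in>bitstrings n. F (supp x)) = (\<Sum>Z\<in>Pow {..<n}. F Z)"
proof -
  have inj: "inj_on (mk n) (Pow {..<n})" by (intro inj_onI) (metis PowD supp_mk)
  have "(\<Sum>x\<in>bitstrings n. F (supp x)) = (\<Sum>Z\<in>Pow {..<n}. F (supp (mk n Z)))"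
    unfolding bitstrings_eq by (subst sum.reindex[OF inj]) simp
  also have "\<dots> = (\<Sum>Z\<in>Pow {..<n}. F Z)" by (intro sum.cong) (auto simp: supp_mk)
  finally show ?thesis .
qed

lemma zeros_bits: "replicate n False \<in> bitstrings n" by (simp add: bitstrings_def)
lemma supp_zeros[simp]: "supp (replicate n False) = {}" by (simp add: supp_def)

lemma nodot_chi: "length x = length s \<Longrightarrow> (\<not> dot_bits x s) \<longleftrightarrow> chi (supp x) (supp s) = 1"
  by (simp add: dot_supp chi_one_iff)

lemma S_sub: "S_f n f \<subseteq> bitstrings n" by (auto simp: S_f_def)
lemma C_sub: "perp n S \<subseteq> bitstrings n" by (auto simp: perp_def)

lemma xor_zeros: "length x = n \<Longrightarrow> xor_bits x (replicate n False) = x"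
  by (auto simp: xor_bits_def intro!: nth_equalityI)
lemma zeros_S: "replicate n False \<in> S_f n f"
proof -
  have "\<forall>x\<in>bitstrings n. f x = f (xor_bits x (replicate n False))"
    by (auto simp: bitstrings_def xor_zeros)
  thus ?thesis unfolding S_f_def using zeros_bits[of n] by simp
qed

lemma zeros_C: "S \<subseteq> bitstrings n \<Longrightarrow> replicate n False \<in> perp n S"
proof -
  have e: "{i. i < n \<and> replicate n False ! i \<and> s ! i} = {}" for s by auto
  have "\<not> dot_bits (replicate n False) s" for s unfolding dot_bits_def length_replicate e by simp
  thus ?thesis by (simp add: perp_def bitstrings_def)
qed

lemma S_closed: assumes "a \<in> S_f n f" "b \<in> S_f n f" shows "xor_bits a b \<in> S_f n f"
proof -
  have A1: "a \<in> bitstrings n" and A2: "\<forall>x\<in>bitstrings n. f x = f (xor_bits x a)"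
    using assms(1) unfolding S_f_def by simp_all
  have B1: "b \<in> bitstrings n" and B2: "\<forall>x\<in>bitstrings n. f x = f (xor_bits x b)"
    using assms(2) unfolding S_f_def by simp_all
  have la: "length a = n" and lb: "length b = n" using A1 B1 by (auto simp: bitstrings_def)
  have "f x = f (xor_bits x (xor_bits a b))" if "x \<in> bitstrings n" for x
  proof -
    have lx: "length x = n" using that by (simp add: bitstrings_def)
    have 1: "f x = f (xor_bits x a)" using bspec[OF A2 that] .
    have xa: "xor_bits x a \<in> bitstrings n" using lx la by (simp add: bitstrings_def)
    have 2: "f (xor_bits x a) = f (xor_bits (xor_bits x a) b)" using bspec[OF B2 xa] .
    have 3: "xor_bits (xor_bits x a) b = xor_bits x (xor_bits a b)" using lx la lb by (simp add: xor_assoc)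
    show ?thesis using 1 2 3 by simp
  qed
  moreover have "xor_bits a b \<in> bitstrings n" using la lb by (simp add: bitstrings_def)
  ultimately show ?thesis unfolding S_f_def by simp
qed

lemma C_closed: assumes "S \<subseteq> bitstrings n" "a \<in> perp n S" "b \<in> perp n S"
  shows "xor_bits a b \<in> perp n S"
proof -
  have la: "length a = n" and lb: "length b = n" using assms by (auto simp: perp_def bitstrings_def)
  have "\<not> dot_bits (xor_bits a b) s" if "s \<in> S" for s
  proof -
    have ls: "length s = n" using that assms by (auto simp: bitstrings_def)
    have "chi (supp a) (supp s) = 1" "chi (supp b) (supp s) = 1"
      using assms that la lb ls by (auto simp: perp_def nodot_chi)
    hence "chi (supp (xor_bits a b)) (supp s) = 1" using la lb by (simp add: supp_xor chi_sd1)
    thus ?thesis using la lb ls by (simp add: nodot_chi supp_xor)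
  qed
  thus ?thesis using la lb by (auto simp: perp_def bitstrings_def)
qed

lemma supp_bits_sub: "x \<in> bitstrings n \<Longrightarrow> supp x \<subseteq> {..<n}"
  using supp_sub[of x] by (auto simp: bitstrings_def)

context
  fixes n :: nat and f :: "bool list \<Rightarrow> bool"
begin

abbreviation "SS \<equiv> supp ` S_f n f"
abbreviation "CC \<equiv> supp ` perp n (S_f n f)"

lemma SS_sub: "SS \<subseteq> Pow {..<n}" using S_sub supp_bits_sub by blast
lemma CC_sub: "CC \<subseteq> Pow {..<n}" using C_sub supp_bits_sub by blast
lemma finite_SS: "finite SS" using SS_sub by (rule finite_subset) auto
lemma finite_CC: "finite CC" using CC_sub by (rule finite_subset) auto

lemma CC_iff: assumes "Y \<subseteq> {..<n}" shows "Y \<in> CC \<longleftrightarrow> (\<forall>W\<in>SS. chi W Y = 1)"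
proof
  assume "Y \<in> CC"
  then obtain c where c: "c \<in> perp n (S_f n f)" "Y = supp c" by auto
  show "\<forall>W\<in>SS. chi W Y = 1"
  proof
    fix W assume "W \<in> SS"
    then obtain s where s: "s \<in> S_f n f" "W = supp s" by auto
    have "length s = n" "length c = n" using s(1) c(1) S_sub[of n f] C_sub[of n "S_f n f"] by (auto simp: bitstrings_def)
    thus "chi W Y = 1" using s c by (auto simp: perp_def nodot_chi chi_comm)
  qed
next
  assume h: "\<forall>W\<in>SS. chi W Y = 1"
  have "mk n Y \<in> perp n (S_f n f)"
  proof -
    have "\<not> dot_bits (mk n Y) s" if "s \<in> S_f n f" for s
    proof -
      have "length s = n" using that S_sub by (auto simp: bitstrings_def)
      thus ?thesis using h that assms by (auto simp: nodot_chi supp_mk chi_comm)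
    qed
    thus ?thesis by (auto simp: perp_def bitstrings_def)
  qed
  thus "Y \<in> CC" using supp_mk[OF assms] by (metis image_eqI)
qed

lemma SS_closed: "\<forall>a\<in>SS. \<forall>b\<in>SS. sd a b \<in> SS"
proof (intro ballI)
  fix a b assume "a \<in> SS" "b \<in> SS"
  then obtain x y where "x \<in> S_f n f" "y \<in> S_f n f" "a = supp x" "b = supp y" by auto
  moreover have "length x = n" "length y = n" using calculation S_sub by (auto simp: bitstrings_def)
  ultimately show "sd a b \<in> SS" using S_closed by (metis supp_xor image_eqI)
qed

lemma CC_closed: "\<forall>a\<in>CC. \<forall>b\<in>CC. sd a b \<in> CC"
proof (intro ballI)
  fix a b assume "a \<in> CC" "b \<in> CC"
  then obtain x y where "x \<in> perp n (S_f n f)" "y \<in> perp n (S_f n f)" "a = supp x" "b = supp y" by auto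
  moreover have "length x = n" "length y = n" using calculation C_sub by (auto simp: bitstrings_def)
  ultimately show "sd a b \<in> CC" using C_closed[OF S_sub] by (metis supp_xor image_eqI)
qed

lemma empty_SS: "{} \<in> SS" using zeros_S by (metis supp_zeros image_eqI)
lemma empty_CC: "{} \<in> CC" using zeros_C[OF S_sub] by (metis supp_zeros image_eqI)

end

lemma sum_if_const: "finite A \<Longrightarrow> B \<subseteq> A \<Longrightarrow> (\<Sum>x\<in>A. if x \<in> B then c else 0) = real (card B) * (c::real)"
proof -
  assume "finite A" "B \<subseteq> A"
  have "(\<Sum>x\<in>A. if x \<in> B then c else 0) = (\<Sum>x\<in>A \<inter> B. c)"
    using \<open>finite A\<close> by (simp only: sum.inter_restrict)
  moreover have "A \<inter> B = B" using \<open>B \<subseteq> A\<close> by blast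
  ultimately show ?thesis by simp
qed

context
  fixes n :: nat and f :: "bool list \<Rightarrow> bool"
begin

lemmas SSs = SS_sub[of n f] and CCs = CC_sub[of n f] and fSS = finite_SS[of n f] and fCC = finite_CC[of n f]
  and eSS = empty_SS[of n f] and eCC = empty_CC[of n f]

lemma SS_mem_sub: "W \<in> SS n f \<Longrightarrow> W \<subseteq> {..<n}" using subsetD[OF SSs] by (rule PowD)
lemma SS_mem_fin: "W \<in> SS n f \<Longrightarrow> finite W" by (rule finite_subset[OF SS_mem_sub]) auto

lemma key_sum: assumes "Y \<subseteq> {..<n}"
  shows "(\<Sum>W\<in>(SS n f). chi W Y) = (if Y \<in> (CC n f) then real (card (SS n f)) else 0)"
proof (cases "Y \<in> (CC n f)")
  case True
  have h: "\<forall>W\<in>(SS n f). chi W Y = 1" using CC_iff[OF assms, THEN iffD1, OF True] .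
  have "(\<Sum>W\<in>(SS n f). chi W Y) = (\<Sum>W\<in>(SS n f). 1)" by (rule sum.cong) (use h in auto)
  thus ?thesis using True by simp
next
  case False
  have "\<not> (\<forall>W\<in>(SS n f). chi W Y = 1)" using False CC_iff[OF assms] by (simp only: not_False_eq_True)
  then obtain W0 where W0: "W0 \<in> (SS n f)" "chi W0 Y \<noteq> 1" unfolding Ball_def by (meson)
  hence m: "chi W0 Y = -1" using chi_pm by blast
  have "(\<Sum>W\<in>(SS n f). chi W Y) = 0"
    by (rule char_sum_zero[OF fSS SS_closed[of n f] W0(1) m]) (simp add: SS_mem_fin)
  thus ?thesis using False by simp
qed

lemma card_SC: "real (card (SS n f)) * real (card (CC n f)) = 2 ^ n"
proof -
  have "(\<Sum>Y\<in>Pow {..<n}. \<Sum>W\<in>(SS n f). chi W Y) = (\<Sum>Y\<in>Pow {..<n}. if Y \<in> (CC n f) then real (card (SS n f)) else 0)"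
    by (intro sum.cong refl) (simp add: key_sum)
  also have "\<dots> = real (card (CC n f)) * real (card (SS n f))"
    using CCs by (intro sum_if_const) auto
  finally have 1: "(\<Sum>Y\<in>Pow {..<n}. \<Sum>W\<in>(SS n f). chi W Y) = real (card (SS n f)) * real (card (CC n f))" by simp
  have "(\<Sum>Y\<in>Pow {..<n}. \<Sum>W\<in>(SS n f). chi W Y) = (\<Sum>W\<in>(SS n f). \<Sum>Y\<in>Pow {..<n}. chi Y W)"
    by (subst sum.swap) (simp add: chi_comm)
  also have "\<dots> = (\<Sum>W\<in>(SS n f). if W = {} then 2 ^ n else 0)"
    by (intro sum.cong) (auto simp: pow_orth[OF _ SS_mem_sub])
  also have "\<dots> = 2 ^ n" using fSS eSS by simp
  finally show ?thesis using 1 by simp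
qed

lemma double_perp: assumes "z \<in> bitstrings n" "\<forall>c\<in>perp n (S_f n f). chi (supp z) (supp c) = 1"
  shows "z \<in> S_f n f"
proof -
  let ?Z = "supp z"
  have Zs: "?Z \<subseteq> {..<n}" using assms supp_bits_sub by blast
  have "(\<Sum>Y\<in>Pow {..<n}. (\<Sum>W\<in>(SS n f). chi W Y) * chi ?Z Y) = (\<Sum>Y\<in>Pow {..<n}. if Y \<in> (CC n f) then real (card (SS n f)) else 0)"
  proof (rule sum.cong)
    fix Y assume Y: "Y \<in> Pow {..<n}"
    show "(\<Sum>W\<in>(SS n f). chi W Y) * chi ?Z Y = (if Y \<in> (CC n f) then real (card (SS n f)) else 0)"
    proof (cases "Y \<in> (CC n f)")
      case True
      then obtain c where "c \<in> perp n (S_f n f)" "Y = supp c" by auto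
      hence "chi ?Z Y = 1" using assms(2) by auto
      thus ?thesis using key_sum[of Y] Y True by simp
    next
      case False thus ?thesis using key_sum[of Y] Y by simp
    qed
  qed simp
  also have "\<dots> = real (card (CC n f)) * real (card (SS n f))"
    using CCs by (intro sum_if_const) auto
  finally have 1: "(\<Sum>Y\<in>Pow {..<n}. (\<Sum>W\<in>(SS n f). chi W Y) * chi ?Z Y) = real (card (SS n f)) * real (card (CC n f))" by simp
  have pos: "real (card (SS n f)) * real (card (CC n f)) > 0"
  proof -
    have "card (SS n f) > 0" using fSS eSS card_gt_0_iff by blast
    moreover have "card (CC n f) > 0" using fCC eCC card_gt_0_iff by blast
    ultimately show ?thesis by simp
  qed
  have "(\<Sum>Y\<in>Pow {..<n}. (\<Sum>W\<in>(SS n f). chi W Y) * chi ?Z Y) = (\<Sum>W\<in>(SS n f). \<Sum>Y\<in>Pow {..<n}. chi Y (sd W ?Z))"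
  proof -
    have "(\<Sum>Y\<in>Pow {..<n}. (\<Sum>W\<in>(SS n f). chi W Y) * chi ?Z Y) = (\<Sum>Y\<in>Pow {..<n}. \<Sum>W\<in>(SS n f). chi W Y * chi ?Z Y)"
      by (simp add: sum_distrib_right)
    also have "\<dots> = (\<Sum>W\<in>(SS n f). \<Sum>Y\<in>Pow {..<n}. chi W Y * chi ?Z Y)"
      by (rule sum.swap)
    also have "\<dots> = (\<Sum>W\<in>(SS n f). \<Sum>Y\<in>Pow {..<n}. chi Y (sd W ?Z))"
      by (intro sum.cong refl) (simp add: chi_sd SS_mem_fin chi_comm)
    finally show ?thesis .
  qed
  also have "\<dots> = (\<Sum>W\<in>(SS n f). if W = ?Z then 2 ^ n else 0)"
    using Zs by (intro sum.cong refl) (simp add: pow_orth sd_sub SS_mem_sub sd_empty_iff)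
  also have "\<dots> = (if ?Z \<in> (SS n f) then 2 ^ n else 0)" using fSS by simp
  finally have "?Z \<in> (SS n f)" using 1 pos by (auto split: if_splits)
  then obtain s where "s \<in> S_f n f" "supp s = ?Z" by auto
  moreover have "length s = length z" using calculation(1) assms(1) S_sub[of n f] by (auto simp: bitstrings_def)
  ultimately show ?thesis using supp_inj by metis
qed

end

lemma mat_app_lin: "mat_app A M (\<lambda>l. v l + c * w l) = (\<lambda>j. mat_app A M v j + c * mat_app A M w j)"
  unfolding mat_app_def by (simp add: sum.distrib sum_distrib_left algebra_simps)
lemma cinner_lin2: "cinner A u (\<lambda>j. a j + c * b j) = cinner A u a + c * cinner A u b"
  unfolding cinner_def by (simp add: sum.distrib sum_distrib_left algebra_simps)
lemma cinner_lin1: "cinner A (\<lambda>j. a j + c * b j) u = cinner A a u + cnj c * cinner A b u"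
  unfolding cinner_def by (simp add: sum.distrib sum_distrib_left algebra_simps)

lemma quad_expand:
  "cinner A (\<lambda>j. v j + c * w j) (mat_app A M (\<lambda>j. v j + c * w j)) =
   cinner A v (mat_app A M v) + c * cinner A v (mat_app A M w) + cnj c * cinner A w (mat_app A M v)
   + cnj c * c * cinner A w (mat_app A M w)"
  by (simp add: mat_app_lin cinner_lin1 cinner_lin2 algebra_simps)

lemma quad_zero:
  fixes r q :: real
  assumes "\<forall>t::real. t * r + t^2 * q \<ge> 0" "q \<ge> 0"
  shows "r = 0"
proof (rule ccontr)
  assume "r \<noteq> 0"
  define t where "t = - r / (q + 1)"
  have q1: "q + 1 > 0" using assms(2) by simp
  have ht: "t * (q + 1) = - r" unfolding t_def using q1 by simp
  have "(q+1)^2 * (t * r + t^2 * q) = (t*(q+1))*r*(q+1) + (t*(q+1))^2*q"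
    by (simp add: algebra_simps power2_eq_square)
  also have "\<dots> = -(r^2)" unfolding ht by (simp add: algebra_simps power2_eq_square)
  finally have e: "(q+1)^2 * (t * r + t^2 * q) = -(r^2)" .
  have "(q+1)^2 * (t * r + t^2 * q) \<ge> 0" using assms(1) by simp
  moreover have "-(r^2) < 0" using \<open>r \<noteq> 0\<close> by simp
  ultimately show False using e by simp
qed

lemma psd_zero:
  assumes "psd A M" "cinner A v (mat_app A M v) = 0"
  shows "cinner A v (mat_app A M w) = 0 \<and> cinner A w (mat_app A M v) = 0"
proof -
  define a where "a = cinner A v (mat_app A M w)"
  define b where "b = cinner A w (mat_app A M v)"
  define q where "q = cinner A w (mat_app A M w)"
  have Q: "cinner A (\<lambda>j. v j + c * w j) (mat_app A M (\<lambda>j. v j + c * w j)) = c * a + cnj c * b + cnj c * c * q" for c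
    using quad_expand[of A v c w M] assms(2) unfolding a_def b_def q_def by simp
  have P: "Im (c * a + cnj c * b + cnj c * c * q) = 0 \<and> Re (c * a + cnj c * b + cnj c * c * q) \<ge> 0" for c
    using assms(1) unfolding psd_def Q[symmetric] by blast
  have qq: "Im q = 0" "Re q \<ge> 0" using assms(1) unfolding psd_def q_def by auto
  have r1: "Re a + Re b = 0"
  proof (rule quad_zero[OF _ qq(2)])
    show "\<forall>t::real. t * (Re a + Re b) + t^2 * Re q \<ge> 0"
    proof
      fix t :: real
      have "Re (complex_of_real t * a + cnj (complex_of_real t) * b + cnj (complex_of_real t) * complex_of_real t * q) \<ge> 0"
        using P by blast
      thus "t * (Re a + Re b) + t^2 * Re q \<ge> 0" by (simp add: algebra_simps power2_eq_square)
    qed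
  qed
  have r2: "Im b - Im a = 0"
  proof (rule quad_zero[OF _ qq(2)])
    show "\<forall>t::real. t * (Im b - Im a) + t^2 * Re q \<ge> 0"
    proof
      fix t :: real
      have "Re (\<i> * complex_of_real t * a + cnj (\<i> * complex_of_real t) * b + cnj (\<i> * complex_of_real t) * (\<i> * complex_of_real t) * q) \<ge> 0"
        using P by blast
      thus "t * (Im b - Im a) + t^2 * Re q \<ge> 0" by (simp add: algebra_simps power2_eq_square)
    qed
  qed
  have i1: "Im a + Im b = 0"
    using P[of 1] qq by simp
  have i2: "Re a - Re b = 0"
    using P[of "\<i>"] qq by (simp add: algebra_simps)
  have "a = 0" using r1 r2 i1 i2 by (simp add: complex_eq_iff)
  moreover have "b = 0" using r1 r2 i1 i2 by (simp add: complex_eq_iff)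
  ultimately show ?thesis unfolding a_def b_def by simp
qed

lemma cinner_IE:
  assumes "finite A"
  shows "cinner A u (mat_app A (\<lambda>j l. (if j = l then 1 else 0) - E j l) v) = cinner A u v - cinner A u (mat_app A E v)"
proof -
  have "mat_app A (\<lambda>j l. (if j = l then 1 else 0) - E j l) v j = v j - mat_app A E v j" if "j \<in> A" for j
  proof -
    have "(\<Sum>l\<in>A. ((if j = l then 1 else 0) - E j l) * v l) = (\<Sum>l\<in>A. (if j = l then v l else 0) - E j l * v l)"
      by (intro sum.cong refl) (simp add: left_diff_distrib)
    also have "\<dots> = (\<Sum>l\<in>A. (if j = l then v l else 0)) - (\<Sum>l\<in>A. E j l * v l)"
      by (simp add: sum_subtractf)
    also have "\<dots> = v j - (\<Sum>l\<in>A. E j l * v l)" using assms that by simp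
    finally show ?thesis unfolding mat_app_def .
  qed
  thus ?thesis unfolding cinner_def by (simp add: sum_subtractf right_diff_distrib)
qed

lemma measure_orth:
  assumes "finite A" "psd A E" "psd A (\<lambda>j l. (if j = l then 1 else 0) - E j l)"
    "cinner A ux ux = 1" "cinner A ux (mat_app A E ux) = 1" "cinner A uy (mat_app A E uy) = 0"
  shows "cinner A uy ux = 0"
proof -
  have "cinner A ux (mat_app A (\<lambda>j l. (if j = l then 1 else 0) - E j l) ux) = 0"
    using assms by (simp add: cinner_IE)
  hence 1: "cinner A uy (mat_app A (\<lambda>j l. (if j = l then 1 else 0) - E j l) ux) = 0"
    using psd_zero[OF assms(3)] by blast
  have 2: "cinner A uy (mat_app A E ux) = 0" using psd_zero[OF assms(2) assms(6)] by blast
  show ?thesis using 1 2 cinner_IE[OF assms(1)] by simp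
qed


definition P :: "nat \<Rightarrow> nat list \<Rightarrow> nat set" where
  "P n is = {i. i < n \<and> odd (count_list is (Suc i))}"

lemma P_sub: "P n is \<subseteq> {..<n}" by (auto simp: P_def)
lemma P_fin[simp]: "finite (P n is)" by (rule finite_subset[OF P_sub]) auto

lemma P_nil[simp]: "P n [] = {}" by (simp add: P_def)

lemma P_cons: "P n (a # is) = (if 1 \<le> a \<and> a \<le> n then sd (P n is) {a - 1} else P n is)"
proof -
  have o: "odd k \<Longrightarrow> 0 < k" for k :: nat by (cases k) auto
  show ?thesis unfolding P_def sd_def by (auto intro: odd_pos)
qed

lemma P_card: "card (P n is) \<le> length is"
proof -
  have "P n is \<subseteq> (\<lambda>a. a - 1) ` set is"
  proof
    fix i assume "i \<in> P n is"
    hence "odd (count_list is (Suc i))" by (simp add: P_def)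
    hence "count_list is (Suc i) \<noteq> 0" by (metis even_zero)
    hence "Suc i \<in> set is" by (simp add: count_list_0_iff)
    thus "i \<in> (\<lambda>a. a - 1) ` set is" by (rule rev_image_eqI) simp
  qed
  hence "card (P n is) \<le> card ((\<lambda>a. a - 1) ` set is)" by (intro card_mono) auto
  also have "\<dots> \<le> card (set is)" by (rule card_image_le) simp
  also have "\<dots> \<le> length is" by (rule card_length)
  finally show ?thesis .
qed

lemma chi_single: "chi X {b} = (if b \<in> X then -1 else 1)"
  by (simp add: chi_def)

lemma sign_prod:
  assumes "length x = n"
  shows "\<forall>i\<in>set is. i \<le> n \<Longrightarrow> (\<Prod>i\<leftarrow>is. query_sign x i) = complex_of_real (chi (supp x) (P n is))"
proof (induction "is")
  case Nil thus ?case by simp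
next
  case (Cons a "is")
  hence IH: "(\<Prod>i\<leftarrow>is. query_sign x i) = complex_of_real (chi (supp x) (P n is))" by simp
  have an: "a \<le> n" using Cons.prems by simp
  show ?case
  proof (cases "a = 0")
    case True
    thus ?thesis using IH by (simp add: P_cons query_sign_def)
  next
    case False
    hence c: "1 \<le> a \<and> a \<le> n" using an by simp
    have "(a - 1 \<in> supp x) = x ! (a - 1)" using c assms by (auto simp: supp_def)
    hence "query_sign x a = complex_of_real (chi (supp x) {a - 1})"
      using False by (simp add: query_sign_def chi_single)
    thus ?thesis using IH c by (simp add: P_cons chi_sd)
  qed
qed

lemma finite_basis_idx: "finite (basis_idx n k m)"
proof -
  have "basis_idx n k m \<subseteq> {xs. set xs \<subseteq> {..n} \<and> length xs = k} \<times> {..<m}"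
    by (auto simp: basis_idx_def)
  moreover have "finite ({xs. set xs \<subseteq> {..n} \<and> length xs = k} \<times> {..<m})"
    by (intro finite_cartesian_product finite_lists_length_eq) auto
  ultimately show ?thesis by (rule finite_subset)
qed

lemma cnj_mult_self: "cnj z * z = complex_of_real ((cmod z)^2)"
  by (metis complex_norm_square mult.commute of_real_power)


lemma lower_bound:
  assumes "na_exact_computes n f k"
  shows "covering_radius n (perp n (S_f n f)) \<le> k"
proof -
  obtain m \<psi> E where
    norm: "cinner (basis_idx n k m) \<psi> \<psi> = 1" and
    psdE: "psd (basis_idx n k m) E" and
    psdIE: "psd (basis_idx n k m) (\<lambda>j l. (if j = l then 1 else 0) - E j l)" and
    acc: "\<forall>x \<in> bitstrings n. cinner (basis_idx n k m) (oracle_apply x \<psi>) (mat_app (basis_idx n k m) E (oracle_apply x \<psi>)) = (if f x then 1 else 0)"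
    using assms unfolding na_exact_computes_def Let_def by blast
  define A where "A = basis_idx n k m"
  have finA: "finite A" unfolding A_def by (rule finite_basis_idx)
  define wg where "wg j = (cmod (\<psi> j))^2" for j
  define G where "G Z = (\<Sum>j\<in>A. wg j * chi Z (P n (fst j)))" for Z
  have wg0: "wg j \<ge> 0" for j unfolding wg_def by simp
  have oa: "oracle_apply x \<psi> j = complex_of_real (chi (supp x) (P n (fst j))) * \<psi> j"
    if "x \<in> bitstrings n" "j \<in> A" for x j
  proof -
    obtain js w where j: "j = (js, w)" by (cases j)
    have "\<forall>i\<in>set js. i \<le> n" "length x = n" using that j by (auto simp: A_def basis_idx_def bitstrings_def)
    thus ?thesis using sign_prod j by (simp add: oracle_apply_def)
  qed
  have ip: "cinner A (oracle_apply x \<psi>) (oracle_apply y \<psi>) = complex_of_real (G (sd (supp x) (supp y)))"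
    if "x \<in> bitstrings n" "y \<in> bitstrings n" for x y
  proof -
    have "cinner A (oracle_apply x \<psi>) (oracle_apply y \<psi>) = (\<Sum>j\<in>A. complex_of_real (wg j * chi (sd (supp x) (supp y)) (P n (fst j))))"
      unfolding cinner_def
    proof (rule sum.cong[OF refl])
      fix j assume j: "j \<in> A"
      have "cnj (oracle_apply x \<psi> j) * oracle_apply y \<psi> j
          = complex_of_real (chi (supp x) (P n (fst j)) * chi (supp y) (P n (fst j))) * (cnj (\<psi> j) * \<psi> j)"
        using oa[OF that(1) j] oa[OF that(2) j] by simp
      also have "\<dots> = complex_of_real (wg j * chi (sd (supp x) (supp y)) (P n (fst j)))"
        by (simp add: cnj_mult_self wg_def chi_sd1)
      finally show "cnj (oracle_apply x \<psi> j) * oracle_apply y \<psi> j = complex_of_real (wg j * chi (sd (supp x) (supp y)) (P n (fst j)))" .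
    qed
    thus ?thesis unfolding G_def by simp
  qed
  have sumwg: "(\<Sum>j\<in>A. wg j) = 1"
  proof -
    have "cinner A \<psi> \<psi> = (\<Sum>j\<in>A. complex_of_real (wg j))"
      unfolding cinner_def wg_def by (simp add: cnj_mult_self)
    also have "\<dots> = complex_of_real (\<Sum>j\<in>A. wg j)" by (rule of_real_sum[symmetric])
    finally have e: "cinner A \<psi> \<psi> = complex_of_real (\<Sum>j\<in>A. wg j)" .
    have "complex_of_real (\<Sum>j\<in>A. wg j) = 1" using e norm[folded A_def] by metis
    thus ?thesis by (simp only: of_real_eq_1_iff)
  qed
  have nrm: "cinner A (oracle_apply x \<psi>) (oracle_apply x \<psi>) = 1" if "x \<in> bitstrings n" for x
    using ip[OF that that] sumwg by (simp add: G_def)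
  have ortho: "cinner A (oracle_apply y \<psi>) (oracle_apply x \<psi>) = 0"
    if "x \<in> bitstrings n" "y \<in> bitstrings n" "f x" "\<not> f y" for x y
  proof (rule measure_orth[OF finA psdE[folded A_def] psdIE[folded A_def] nrm[OF that(1)]])
    show "cinner A (oracle_apply x \<psi>) (mat_app A E (oracle_apply x \<psi>)) = 1"
      using bspec[OF acc that(1)] that(3) unfolding A_def by simp
    show "cinner A (oracle_apply y \<psi>) (mat_app A E (oracle_apply y \<psi>)) = 0"
      using bspec[OF acc that(2)] that(4) unfolding A_def by simp
  qed
  have Gz: "G (supp z) = 0" if z: "z \<in> bitstrings n" "z \<notin> S_f n f" for z
  proof -
    have "\<not> (\<forall>x\<in>bitstrings n. f x = f (xor_bits x z))" using z unfolding S_f_def by simp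
    then obtain x where x: "x \<in> bitstrings n" "f x \<noteq> f (xor_bits x z)" by blast
    define y where "y = xor_bits x z"
    have lx: "length x = n" and lz: "length z = n" using x z by (auto simp: bitstrings_def)
    have yb: "y \<in> bitstrings n" using lx lz by (simp add: y_def bitstrings_def)
    have sy: "supp y = sd (supp x) (supp z)" using lx lz by (simp add: y_def supp_xor)
    show ?thesis
    proof (cases "f x")
      case True
      hence "\<not> f y" using x by (simp add: y_def)
      hence "complex_of_real (G (sd (supp y) (supp x))) = 0"
        using ortho[OF x(1) yb True] ip[OF yb x(1)] by simp
      moreover have "sd (supp y) (supp x) = supp z" unfolding sy by (metis sd_cancel sd_comm)
      ultimately show ?thesis by simp
    next
      case False
      hence "f y" using x by (simp add: y_def)
      hence "complex_of_real (G (sd (supp x) (supp y))) = 0"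
        using ortho[OF yb x(1) _ False] ip[OF x(1) yb] by simp
      moreover have "sd (supp x) (supp y) = supp z" unfolding sy by (rule sd_cancel)
      ultimately show ?thesis by simp
    qed
  qed
  define h where "h Y = (\<Sum>Z\<in>Pow {..<n}. G Z * chi Z Y)" for Y
  have hform: "h Y = (\<Sum>j\<in>A. wg j * (if P n (fst j) = Y then 2 ^ n else 0))" if Y: "Y \<subseteq> {..<n}" for Y
  proof -
    have "h Y = (\<Sum>Z\<in>Pow {..<n}. \<Sum>j\<in>A. wg j * chi Z (P n (fst j)) * chi Z Y)"
      unfolding h_def G_def by (simp add: sum_distrib_right)
    also have "\<dots> = (\<Sum>j\<in>A. \<Sum>Z\<in>Pow {..<n}. wg j * chi Z (sd (P n (fst j)) Y))"
      by (subst sum.swap) (use Y in \<open>simp add: chi_sd finite_subset mult.assoc\<close>)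
    also have "\<dots> = (\<Sum>j\<in>A. wg j * (if P n (fst j) = Y then 2 ^ n else 0))"
    proof (rule sum.cong[OF refl])
      fix j assume "j \<in> A"
      have "sd (P n (fst j)) Y \<subseteq> {..<n}" using Y P_sub by (rule sd_sub[rotated])
      thus "(\<Sum>Z\<in>Pow {..<n}. wg j * chi Z (sd (P n (fst j)) Y)) = wg j * (if P n (fst j) = Y then 2 ^ n else 0)"
        by (simp add: sum_distrib_left[symmetric] pow_orth sd_empty_iff)
    qed
    finally show ?thesis .
  qed
  obtain j0 where j0: "j0 \<in> A" "wg j0 > 0"
  proof -
    have "\<exists>j\<in>A. wg j \<noteq> 0"
    proof (rule ccontr)
      assume "\<not> (\<exists>j\<in>A. wg j \<noteq> 0)"
      hence "(\<Sum>j\<in>A. wg j) = 0" by simp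
      thus False using sumwg by simp
    qed
    thus ?thesis using that wg0 by (metis order_le_less)
  qed
  define Y0 where "Y0 = P n (fst j0)"
  have Y0s: "Y0 \<subseteq> {..<n}" unfolding Y0_def by (rule P_sub)
  have hpos: "h Y0 > 0"
  proof -
    have "wg j0 * 2 ^ n \<le> (\<Sum>j\<in>A. wg j * (if P n (fst j) = Y0 then 2 ^ n else 0))"
      using member_le_sum[of j0 A "\<lambda>j. wg j * (if P n (fst j) = Y0 then 2 ^ n else 0)"] finA j0 wg0
      by (simp add: Y0_def)
    moreover have "wg j0 * 2 ^ n > 0" using j0 by simp
    ultimately show ?thesis using hform[OF Y0s] by simp
  qed
  have ham: "hamming (mk n Y0) c \<le> k" if c: "c \<in> perp n (S_f n f)" for c
  proof -
    have cb: "c \<in> bitstrings n" using c by (simp add: perp_def)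
    have lc: "length c = n" using cb by (simp add: bitstrings_def)
    have Cs: "supp c \<subseteq> {..<n}" using supp_bits_sub[OF cb] .
    define Yc where "Yc = sd Y0 (supp c)"
    have Ycs: "Yc \<subseteq> {..<n}" unfolding Yc_def using Y0s Cs by (rule sd_sub)
    have "h Yc = h Y0"
      unfolding h_def
    proof (rule sum.cong[OF refl])
      fix Z assume Z: "Z \<in> Pow {..<n}"
      show "G Z * chi Z Yc = G Z * chi Z Y0"
      proof (cases "G Z = 0")
        case False
        have "supp (mk n Z) = Z" using Z by (simp add: supp_mk)
        hence "mk n Z \<in> S_f n f" using Gz[of "mk n Z"] False by (auto simp: bitstrings_def)
        hence "\<not> dot_bits c (mk n Z)" using c by (auto simp: perp_def)
        hence "chi (supp c) Z = 1" using lc \<open>supp (mk n Z) = Z\<close> by (simp add: nodot_chi)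
        hence "chi Z (supp c) = 1" by (simp add: chi_comm)
        thus ?thesis unfolding Yc_def using Y0s by (simp add: chi_sd finite_subset)
      qed simp
    qed
    hence "h Yc > 0" using hpos by simp
    hence "\<exists>j\<in>A. P n (fst j) = Yc" using hform[OF Ycs] by (auto intro: ccontr)
    then obtain j where j: "j \<in> A" "P n (fst j) = Yc" by blast
    have "card Yc \<le> k" using P_card[of n "fst j"] j by (auto simp: A_def basis_idx_def)
    moreover have "hamming (mk n Y0) c = card Yc"
      using lc Y0s by (simp add: hamming_supp supp_mk Yc_def)
    ultimately show ?thesis by simp
  qed
  have C_fin: "finite (perp n (S_f n f))" using C_sub finite_bitstrings by (rule finite_subset)
  have C_ne: "perp n (S_f n f) \<noteq> {}" using zeros_C[OF S_sub] by blast
  have T0: "mk n Y0 \<in> bitstrings n" by (simp add: bitstrings_def)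
  have "covering_radius n (perp n (S_f n f)) \<le> Max ((\<lambda>y. hamming (mk n Y0) y) ` perp n (S_f n f))"
    unfolding covering_radius_def using T0 by (intro Min_le) auto
  also have "\<dots> \<le> k" using C_fin C_ne ham by (simp add: Max_le_iff)
  finally show ?thesis .
qed


definition Dc :: "nat set \<Rightarrow> bool list \<Rightarrow> nat set" where "Dc Y0 c = sd Y0 (supp c)"
definition idx :: "nat \<Rightarrow> nat set \<Rightarrow> bool list \<Rightarrow> nat list" where
  "idx r Y0 c = map Suc (sorted_list_of_set (Dc Y0 c)) @ replicate (r - card (Dc Y0 c)) 0"

lemma Dc_sub: "Y0 \<subseteq> {..<n} \<Longrightarrow> c \<in> bitstrings n \<Longrightarrow> Dc Y0 c \<subseteq> {..<n}"
  unfolding Dc_def by (rule sd_sub) (auto dest: supp_bits_sub)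
lemma Dc_fin[simp]: "finite Y0 \<Longrightarrow> finite (Dc Y0 c)" by (simp add: Dc_def)

lemma idx_len: "card (Dc Y0 c) \<le> r \<Longrightarrow> finite Y0 \<Longrightarrow> length (idx r Y0 c) = r"
  by (simp add: idx_def)

lemma idx_set: "Y0 \<subseteq> {..<n} \<Longrightarrow> c \<in> bitstrings n \<Longrightarrow> \<forall>i\<in>set (idx r Y0 c). i \<le> n"
proof -
  assume a: "Y0 \<subseteq> {..<n}" "c \<in> bitstrings n"
  have f: "finite Y0" using a(1) finite_subset by blast
  have "Dc Y0 c \<subseteq> {..<n}" using Dc_sub[OF a] .
  thus ?thesis using f by (auto simp: idx_def)
qed

lemma idx_set0: "finite Y0 \<Longrightarrow> set (idx r Y0 c) - {0} = Suc ` Dc Y0 c"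
  by (auto simp: idx_def)

lemma prod_sign:
  "finite D \<Longrightarrow> (\<Prod>i\<in>D. if i \<in> X then -1 else (1::complex)) = (-1) ^ card (D \<inter> X)"
proof (induction D rule: finite_induct)
  case empty thus ?case by simp
next
  case (insert a F)
  have "insert a F \<inter> X = (if a \<in> X then insert a (F \<inter> X) else F \<inter> X)" by auto
  moreover have "a \<notin> F \<inter> X" using insert by simp
  ultimately show ?case using insert by (simp add: card_insert_if)
qed

lemma idx_sign:
  assumes "Y0 \<subseteq> {..<n}" "c \<in> bitstrings n" "x \<in> bitstrings n"
  shows "(\<Prod>i\<leftarrow>idx r Y0 c. query_sign x i) = complex_of_real (chi (supp x) (Dc Y0 c))"
proof -
  have f: "finite Y0" using assms(1) finite_subset by blast
  have Ds: "Dc Y0 c \<subseteq> {..<n}" using Dc_sub[OF assms(1,2)] .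
  have lx: "length x = n" using assms(3) by (simp add: bitstrings_def)
  have "(\<Prod>i\<leftarrow>idx r Y0 c. query_sign x i) = (\<Prod>i\<leftarrow>sorted_list_of_set (Dc Y0 c). query_sign x (Suc i))"
    by (simp add: idx_def query_sign_def o_def)
  also have "\<dots> = (\<Prod>i\<in>Dc Y0 c. query_sign x (Suc i))"
    using f by (simp add: prod.distinct_set_conv_list[symmetric])
  also have "\<dots> = (\<Prod>i\<in>Dc Y0 c. if i \<in> supp x then -1 else 1)"
    using Ds lx by (intro prod.cong refl) (auto simp: query_sign_def supp_def)
  also have "\<dots> = (-1) ^ card (Dc Y0 c \<inter> supp x)" using f by (simp add: prod_sign)
  also have "\<dots> = complex_of_real (chi (supp x) (Dc Y0 c))" by (simp add: chi_def Int_commute)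
  finally show ?thesis .
qed

lemma idx_inj:
  assumes "Y0 \<subseteq> {..<n}" "C \<subseteq> bitstrings n"
  shows "inj_on (idx r Y0) C"
proof (rule inj_onI)
  fix a b assume ab: "a \<in> C" "b \<in> C" "idx r Y0 a = idx r Y0 b"
  have f: "finite Y0" using assms(1) finite_subset by blast
  have "Suc ` Dc Y0 a = Suc ` Dc Y0 b" using idx_set0[OF f, of r a] idx_set0[OF f, of r b] ab(3) by simp
  hence "Dc Y0 a = Dc Y0 b" by (simp add: inj_image_eq_iff)
  hence "supp a = supp b" unfolding Dc_def by (metis sd_cancel)
  moreover have "length a = length b" using ab assms by (auto simp: bitstrings_def)
  ultimately show "a = b" using supp_inj by blast
qed


definition LL :: "nat \<Rightarrow> (bool list \<Rightarrow> bool) \<Rightarrow> nat \<Rightarrow> nat set \<Rightarrow> (nat list \<times> nat) set" where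
  "LL n f r Y0 = (\<lambda>c. (idx r Y0 c, 0::nat)) ` perp n (S_f n f)"
definition sc :: "nat \<Rightarrow> (bool list \<Rightarrow> bool) \<Rightarrow> real" where
  "sc n f = 1 / sqrt (real (card (perp n (S_f n f))))"
definition psi :: "nat \<Rightarrow> (bool list \<Rightarrow> bool) \<Rightarrow> nat \<Rightarrow> nat set \<Rightarrow> nat list \<times> nat \<Rightarrow> complex" where
  "psi n f r Y0 j = (if j \<in> LL n f r Y0 then complex_of_real (sc n f) else 0)"

lemma C_fin: "finite (perp n (S_f n f))" using C_sub finite_bitstrings by (rule finite_subset)
lemma C_ne: "perp n (S_f n f) \<noteq> {}" using zeros_C[OF S_sub] by blast
lemma C_card_pos: "card (perp n (S_f n f)) > 0" using C_fin C_ne by (simp add: card_gt_0_iff)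
lemma sc_sq: "sc n f * sc n f * real (card (perp n (S_f n f))) = 1"
  using C_card_pos[of n f] by (simp add: sc_def)

context
  fixes n :: nat and f :: "bool list \<Rightarrow> bool" and r :: nat and Y0 :: "nat set"
  assumes Y0s: "Y0 \<subseteq> {..<n}" and rbound: "\<forall>c\<in>perp n (S_f n f). card (Dc Y0 c) \<le> r"
begin

lemma Y0f: "finite Y0" using Y0s finite_subset by blast

lemma L_sub: "LL n f r Y0 \<subseteq> basis_idx n r 1"
proof
  fix j assume "j \<in> LL n f r Y0"
  then obtain c where c: "c \<in> perp n (S_f n f)" "j = (idx r Y0 c, 0)" by (auto simp: LL_def)
  have cb: "c \<in> bitstrings n" using c(1) by (simp add: perp_def)
  show "j \<in> basis_idx n r 1"
    using c idx_len[OF bspec[OF rbound c(1)] Y0f] idx_set[OF Y0s cb, of r] by (simp add: basis_idx_def)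
qed

lemma Linj: "inj_on (\<lambda>c. (idx r Y0 c, 0::nat)) (perp n (S_f n f))"
  using idx_inj[OF Y0s C_sub, of r] by (auto simp: inj_on_def)

lemma reidx:
  assumes "\<forall>j\<in>basis_idx n r 1 - LL n f r Y0. F j = 0"
  shows "(\<Sum>j\<in>basis_idx n r 1. F j) = (\<Sum>c\<in>perp n (S_f n f). F (idx r Y0 c, 0))"
proof -
  have "(\<Sum>j\<in>basis_idx n r 1. F j) = (\<Sum>j\<in>LL n f r Y0. F j)"
    using assms L_sub finite_basis_idx by (intro sum.mono_neutral_right) auto
  also have "\<dots> = (\<Sum>c\<in>perp n (S_f n f). F (idx r Y0 c, 0))"
    unfolding LL_def by (subst sum.reindex[OF Linj]) (simp add: o_def)
  finally show ?thesis .
qed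

lemma psi_in: "c \<in> perp n (S_f n f) \<Longrightarrow> psi n f r Y0 (idx r Y0 c, 0) = complex_of_real (sc n f)"
  by (auto simp: psi_def LL_def)

lemma oa_out: "j \<notin> LL n f r Y0 \<Longrightarrow> oracle_apply x (psi n f r Y0) j = 0"
  by (cases j) (simp add: oracle_apply_def psi_def)

lemma oa_in: "c \<in> perp n (S_f n f) \<Longrightarrow> x \<in> bitstrings n \<Longrightarrow>
   oracle_apply x (psi n f r Y0) (idx r Y0 c, 0) = complex_of_real (chi (supp x) (Dc Y0 c) * sc n f)"
proof -
  assume c: "c \<in> perp n (S_f n f)" and x: "x \<in> bitstrings n"
  have cb: "c \<in> bitstrings n" using c by (simp add: perp_def)
  show ?thesis using idx_sign[OF Y0s cb x, of r] psi_in[OF c] by (simp add: oracle_apply_def)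
qed

lemma cinner_oa: "x \<in> bitstrings n \<Longrightarrow> cinner (basis_idx n r 1) (oracle_apply x (psi n f r Y0)) v =
   (\<Sum>c\<in>perp n (S_f n f). complex_of_real (chi (supp x) (Dc Y0 c) * sc n f) * v (idx r Y0 c, 0))"
  unfolding cinner_def by (subst reidx) (auto simp: oa_out oa_in)

lemma psi_norm: "cinner (basis_idx n r 1) (psi n f r Y0) (psi n f r Y0) = 1"
proof -
  have "cinner (basis_idx n r 1) (psi n f r Y0) (psi n f r Y0) = (\<Sum>c\<in>perp n (S_f n f). cnj (psi n f r Y0 (idx r Y0 c, 0)) * psi n f r Y0 (idx r Y0 c, 0))"
    unfolding cinner_def by (subst reidx) (auto simp: psi_def)
  also have "\<dots> = (\<Sum>c\<in>perp n (S_f n f). complex_of_real (sc n f * sc n f))"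
    by (intro sum.cong refl) (simp add: psi_in)
  also have "\<dots> = complex_of_real (sc n f * sc n f * real (card (perp n (S_f n f))))"
    by (simp add: algebra_simps)
  finally show ?thesis by (simp add: sc_sq)
qed

end

lemma CC_reindex: "(\<Sum>c\<in>perp n (S_f n f). g (supp c)) = (\<Sum>W\<in>CC n f. g W)"
proof -
  have "inj_on supp (perp n (S_f n f))"
  proof (rule inj_onI)
    fix a b assume "a \<in> perp n (S_f n f)" "b \<in> perp n (S_f n f)" "supp a = supp b"
    moreover have "length a = length b" using calculation(1,2) by (simp add: perp_def bitstrings_def)
    ultimately show "a = b" using supp_inj by blast
  qed
  thus ?thesis by (simp add: sum.reindex)
qed

lemma chi_sum_C:
  assumes x: "x \<in> bitstrings n" and y: "y \<in> bitstrings n"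
  shows "(\<Sum>c\<in>perp n (S_f n f). chi (supp (xor_bits x y)) (supp c)) =
     (if xor_bits x y \<in> S_f n f then real (card (perp n (S_f n f))) else 0)"
proof -
  have lx: "length x = n" and ly: "length y = n" using x y by (auto simp: bitstrings_def)
  define z where "z = xor_bits x y"
  have lz: "length z = n" using lx ly by (simp add: z_def)
  have zb: "z \<in> bitstrings n" using lz by (simp add: bitstrings_def)
  show ?thesis
  proof (cases "z \<in> S_f n f")
    case True
    have "(\<Sum>c\<in>perp n (S_f n f). chi (supp z) (supp c)) = (\<Sum>c\<in>perp n (S_f n f). 1)"
    proof (intro sum.cong refl)
      fix c assume c: "c \<in> perp n (S_f n f)"
      hence "\<not> dot_bits c z" using True by (simp add: perp_def)
      moreover have "length c = n" using c by (simp add: perp_def bitstrings_def)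
      ultimately show "chi (supp z) (supp c) = 1" using lz by (simp add: nodot_chi chi_comm)
    qed
    thus ?thesis using True by (simp add: z_def)
  next
    case False
    have "\<not> (\<forall>c\<in>perp n (S_f n f). chi (supp z) (supp c) = 1)"
    proof
      assume "\<forall>c\<in>perp n (S_f n f). chi (supp z) (supp c) = 1"
      hence "z \<in> S_f n f" by (rule double_perp[OF zb])
      thus False using False by simp
    qed
    then obtain c0 where c0: "c0 \<in> perp n (S_f n f)" "chi (supp z) (supp c0) \<noteq> 1"
      unfolding Ball_def by meson
    have m: "chi (supp c0) (supp z) = -1" using c0(2) chi_pm by (metis chi_comm)
    have W0: "supp c0 \<in> CC n f" using c0(1) by (rule imageI)
    have "(\<Sum>c\<in>perp n (S_f n f). chi (supp z) (supp c)) = (\<Sum>W\<in>CC n f. chi W (supp z))"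
      by (subst CC_reindex) (simp add: chi_comm)
    also have "\<dots> = 0"
      by (rule char_sum_zero[OF finite_CC CC_closed W0 m]) simp
    finally show ?thesis using False by (simp add: z_def)
  qed
qed

context
  fixes n :: nat and f :: "bool list \<Rightarrow> bool" and r :: nat and Y0 :: "nat set"
  assumes Y0s: "Y0 \<subseteq> {..<n}" and rbound: "\<forall>c\<in>perp n (S_f n f). card (Dc Y0 c) \<le> r"
begin

lemmas cinner_oa' = cinner_oa[OF Y0s rbound] and oa_in' = oa_in[OF Y0s rbound]
  and reidx' = reidx[OF Y0s rbound] and oa_out' = oa_out[OF Y0s rbound]
  and L_sub' = L_sub[OF Y0s rbound] and psi_norm' = psi_norm[OF Y0s rbound]

lemma Y0f': "finite Y0" using Y0s finite_subset by blast

lemma ip: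
  assumes x: "x \<in> bitstrings n" and y: "y \<in> bitstrings n"
  shows "cinner (basis_idx n r 1) (oracle_apply x (psi n f r Y0)) (oracle_apply y (psi n f r Y0))
     = complex_of_real (if xor_bits x y \<in> S_f n f then chi (sd (supp x) (supp y)) Y0 else 0)"
proof -
  have lx: "length x = n" and ly: "length y = n" using x y by (auto simp: bitstrings_def)
  let ?Z = "sd (supp x) (supp y)"
  have sz: "supp (xor_bits x y) = ?Z" using lx ly by (simp add: supp_xor)
  have "cinner (basis_idx n r 1) (oracle_apply x (psi n f r Y0)) (oracle_apply y (psi n f r Y0))
     = (\<Sum>c\<in>perp n (S_f n f). complex_of_real (sc n f * sc n f * chi ?Z Y0 * chi ?Z (supp c)))"
  proof (subst cinner_oa'[OF x], intro sum.cong refl)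
    fix c assume c: "c \<in> perp n (S_f n f)"
    have "chi (supp x) (Dc Y0 c) * chi (supp y) (Dc Y0 c) = chi ?Z (Dc Y0 c)"
      by (simp add: chi_sd1)
    also have "\<dots> = chi ?Z Y0 * chi ?Z (supp c)" unfolding Dc_def using Y0f' by (simp add: chi_sd)
    finally have e: "chi (supp x) (Dc Y0 c) * chi (supp y) (Dc Y0 c) = chi ?Z Y0 * chi ?Z (supp c)" .
    show "complex_of_real (chi (supp x) (Dc Y0 c) * sc n f) * oracle_apply y (psi n f r Y0) (idx r Y0 c, 0)
       = complex_of_real (sc n f * sc n f * chi ?Z Y0 * chi ?Z (supp c))"
      using oa_in'[OF c y] e by (simp add: algebra_simps flip: of_real_mult)
  qed
  also have "\<dots> = complex_of_real (\<Sum>c\<in>perp n (S_f n f). sc n f * sc n f * chi ?Z Y0 * chi ?Z (supp c))"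
    by (simp only: of_real_sum)
  also have "\<dots> = complex_of_real (sc n f * sc n f * chi ?Z Y0 * (\<Sum>c\<in>perp n (S_f n f). chi ?Z (supp c)))"
    by (simp only: sum_distrib_left)
  also have "\<dots> = complex_of_real (if xor_bits x y \<in> S_f n f then chi ?Z Y0 else 0)"
  proof -
    have "sc n f * sc n f * chi ?Z Y0 * (\<Sum>c\<in>perp n (S_f n f). chi ?Z (supp c)) = (if xor_bits x y \<in> S_f n f then chi ?Z Y0 else 0)"
      using chi_sum_C[where f=f, OF x y] sz sc_sq[of n f] by (simp add: algebra_simps)
    thus ?thesis by (rule arg_cong)
  qed
  finally show ?thesis .
qed

end

lemma matE:
  "mat_app A (\<lambda>j l. k * (\<Sum>x\<in>B. \<phi> x j * cnj (\<phi> x l))) v = (\<lambda>j. k * (\<Sum>x\<in>B. \<phi> x j * cinner A (\<phi> x) v))"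
proof
  fix j
  have "mat_app A (\<lambda>j l. k * (\<Sum>x\<in>B. \<phi> x j * cnj (\<phi> x l))) v j = (\<Sum>l\<in>A. \<Sum>x\<in>B. k * (\<phi> x j * (cnj (\<phi> x l) * v l)))"
    unfolding mat_app_def by (simp add: sum_distrib_left sum_distrib_right mult.assoc)
  also have "\<dots> = (\<Sum>x\<in>B. \<Sum>l\<in>A. k * (\<phi> x j * (cnj (\<phi> x l) * v l)))" by (rule sum.swap)
  also have "\<dots> = k * (\<Sum>x\<in>B. \<phi> x j * cinner A (\<phi> x) v)"
    unfolding cinner_def by (simp add: sum_distrib_left)
  finally show "mat_app A (\<lambda>j l. k * (\<Sum>x\<in>B. \<phi> x j * cnj (\<phi> x l))) v j = k * (\<Sum>x\<in>B. \<phi> x j * cinner A (\<phi> x) v)" .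
qed

lemma quadE:
  "cinner A v (mat_app A (\<lambda>j l. complex_of_real k * (\<Sum>x\<in>B. \<phi> x j * cnj (\<phi> x l))) v)
    = complex_of_real (k * (\<Sum>x\<in>B. (cmod (cinner A (\<phi> x) v))^2))"
proof -
  have "cinner A v (mat_app A (\<lambda>j l. complex_of_real k * (\<Sum>x\<in>B. \<phi> x j * cnj (\<phi> x l))) v)
     = (\<Sum>j\<in>A. \<Sum>x\<in>B. complex_of_real k * (cinner A (\<phi> x) v * (cnj (v j) * \<phi> x j)))"
    unfolding matE cinner_def[of A v] by (simp add: sum_distrib_left mult_ac)
  also have "\<dots> = (\<Sum>x\<in>B. complex_of_real k * (cinner A (\<phi> x) v * cnj (cinner A (\<phi> x) v)))"
    by (subst sum.swap) (simp add: cinner_def[of A "\<phi> _" v] sum_distrib_left mult_ac)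
  also have "\<dots> = (\<Sum>x\<in>B. complex_of_real (k * (cmod (cinner A (\<phi> x) v))^2))"
    by (intro sum.cong refl) (metis cnj_mult_self mult.commute of_real_mult)
  also have "\<dots> = complex_of_real (k * (\<Sum>x\<in>B. (cmod (cinner A (\<phi> x) v))^2))"
    by (simp add: sum_distrib_left)
  finally show ?thesis .
qed


lemma xor_cancel2: "length a = length b \<Longrightarrow> xor_bits (xor_bits a b) b = a"
  by (auto simp: xor_bits_def intro!: nth_equalityI)

lemma card_S_C: "real (card (S_f n f)) * real (card (perp n (S_f n f))) = 2 ^ n"
proof -
  have "inj_on supp (S_f n f)"
  proof (rule inj_onI)
    fix a b assume "a \<in> S_f n f" "b \<in> S_f n f" "supp a = supp b"
    moreover have "a \<in> bitstrings n" "b \<in> bitstrings n" using calculation(1,2) subsetD[OF S_sub] by blast+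
    moreover have "length a = length b" using calculation(4,5) by (simp add: bitstrings_def)
    ultimately show "a = b" using supp_inj by blast
  qed
  moreover have "inj_on supp (perp n (S_f n f))"
  proof (rule inj_onI)
    fix a b assume "a \<in> perp n (S_f n f)" "b \<in> perp n (S_f n f)" "supp a = supp b"
    moreover have "length a = length b" using calculation(1,2) by (simp add: perp_def bitstrings_def)
    ultimately show "a = b" using supp_inj by blast
  qed
  ultimately show ?thesis using card_SC[of n f] by (simp add: card_image)
qed

lemma S_card_pos: "card (S_f n f) > 0"
proof -
  have "finite (S_f n f)" using S_sub finite_bitstrings by (rule finite_subset)
  moreover have "S_f n f \<noteq> {}" using zeros_S[of n f] by (metis empty_iff)
  ultimately show ?thesis by (simp add: card_gt_0_iff)
qed

lemma sum_bits_chi: "W \<subseteq> {..<n} \<Longrightarrow> (\<Sum>x\<in>bitstrings n. chi (supp x) W) = (if W = {} then 2 ^ n else 0)"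
  using sum_bits[of "\<lambda>Z. chi Z W" n] pow_orth[of "{..<n}" W] by simp

context
  fixes n :: nat and f :: "bool list \<Rightarrow> bool" and r :: nat and Y0 :: "nat set"
  assumes Y0s: "Y0 \<subseteq> {..<n}" and rbound: "\<forall>c\<in>perp n (S_f n f). card (Dc Y0 c) \<le> r"
begin

lemmas cinner_oa'' = cinner_oa[OF Y0s rbound] and reidx'' = reidx[OF Y0s rbound]
  and L_sub'' = L_sub[OF Y0s rbound] and ip' = ip[OF Y0s rbound]

lemma Dc_inj: "c \<in> perp n (S_f n f) \<Longrightarrow> c' \<in> perp n (S_f n f) \<Longrightarrow> Dc Y0 c = Dc Y0 c' \<Longrightarrow> c = c'"
proof -
  assume c: "c \<in> perp n (S_f n f)" "c' \<in> perp n (S_f n f)" "Dc Y0 c = Dc Y0 c'"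
  hence "supp c = supp c'" unfolding Dc_def by (metis sd_cancel)
  moreover have "length c = length c'" using c by (simp add: perp_def bitstrings_def)
  ultimately show "c = c'" using supp_inj by blast
qed

lemma bessel:
  "(\<Sum>x\<in>bitstrings n. (cmod (cinner (basis_idx n r 1) (oracle_apply x (psi n f r Y0)) v))^2)
    = sc n f * sc n f * 2 ^ n * (\<Sum>c\<in>perp n (S_f n f). (cmod (v (idx r Y0 c, 0)))^2)"
proof -
  let ?C = "perp n (S_f n f)"
  let ?a = "\<lambda>c. v (idx r Y0 c, 0)"
  let ?q = "\<lambda>x. cinner (basis_idx n r 1) (oracle_apply x (psi n f r Y0)) v"
  let ?g = "\<lambda>x c. chi (supp x) (Dc Y0 c) * sc n f"
  have Dsub: "c \<in> ?C \<Longrightarrow> Dc Y0 c \<subseteq> {..<n}" for c using Dc_sub[OF Y0s] by (simp add: perp_def)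
  have Y0f: "finite Y0" using Y0s finite_subset by blast
  have "complex_of_real (\<Sum>x\<in>bitstrings n. (cmod (?q x))^2) = (\<Sum>x\<in>bitstrings n. cnj (?q x) * ?q x)"
    by (simp add: cnj_mult_self)
  also have "\<dots> = (\<Sum>x\<in>bitstrings n. \<Sum>c\<in>?C. \<Sum>c'\<in>?C. complex_of_real (?g x c * ?g x c') * (cnj (?a c) * ?a c'))"
  proof (intro sum.cong refl)
    fix x assume x: "x \<in> bitstrings n"
    have 1: "cnj (?q x) = (\<Sum>c\<in>?C. complex_of_real (?g x c) * cnj (?a c))"
      unfolding cinner_oa''[OF x] by simp
    have 2: "?q x = (\<Sum>c'\<in>?C. complex_of_real (?g x c') * ?a c')"
      unfolding cinner_oa''[OF x] by simp
    have "cnj (?q x) * ?q x = (\<Sum>c\<in>?C. \<Sum>c'\<in>?C. (complex_of_real (?g x c) * cnj (?a c)) * (complex_of_real (?g x c') * ?a c'))"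
      by (subst 1, subst 2, rule sum_product)
    also have "\<dots> = (\<Sum>c\<in>?C. \<Sum>c'\<in>?C. complex_of_real (?g x c * ?g x c') * (cnj (?a c) * ?a c'))"
      by (intro sum.cong refl) (simp only: of_real_mult mult_ac)
    finally show "cnj (?q x) * ?q x = (\<Sum>c\<in>?C. \<Sum>c'\<in>?C. complex_of_real (?g x c * ?g x c') * (cnj (?a c) * ?a c'))" .
  qed
  also have "\<dots> = (\<Sum>c\<in>?C. \<Sum>c'\<in>?C. complex_of_real (sc n f * sc n f * (\<Sum>x\<in>bitstrings n. chi (supp x) (sd (Dc Y0 c) (Dc Y0 c')))) * (cnj (?a c) * ?a c'))"
  proof -
    have "(\<Sum>x\<in>bitstrings n. \<Sum>c\<in>?C. \<Sum>c'\<in>?C. complex_of_real (?g x c * ?g x c') * (cnj (?a c) * ?a c'))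
        = (\<Sum>c\<in>?C. \<Sum>c'\<in>?C. \<Sum>x\<in>bitstrings n. complex_of_real (?g x c * ?g x c') * (cnj (?a c) * ?a c'))"
    proof -
      have "(\<Sum>x\<in>bitstrings n. \<Sum>c\<in>?C. \<Sum>c'\<in>?C. complex_of_real (?g x c * ?g x c') * (cnj (?a c) * ?a c'))
        = (\<Sum>c\<in>?C. \<Sum>x\<in>bitstrings n. \<Sum>c'\<in>?C. complex_of_real (?g x c * ?g x c') * (cnj (?a c) * ?a c'))"
        by (rule sum.swap)
      also have "\<dots> = (\<Sum>c\<in>?C. \<Sum>c'\<in>?C. \<Sum>x\<in>bitstrings n. complex_of_real (?g x c * ?g x c') * (cnj (?a c) * ?a c'))"
        by (rule sum.cong[OF refl]) (rule sum.swap)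
      finally show ?thesis .
    qed
    also have "\<dots> = (\<Sum>c\<in>?C. \<Sum>c'\<in>?C. complex_of_real (sc n f * sc n f * (\<Sum>x\<in>bitstrings n. chi (supp x) (sd (Dc Y0 c) (Dc Y0 c')))) * (cnj (?a c) * ?a c'))"
    proof (intro sum.cong refl)
      fix c c'
      have "(\<Sum>x\<in>bitstrings n. complex_of_real (?g x c * ?g x c') * (cnj (?a c) * ?a c'))
          = complex_of_real (\<Sum>x\<in>bitstrings n. ?g x c * ?g x c') * (cnj (?a c) * ?a c')"
        by (simp add: sum_distrib_right)
      also have "(\<Sum>x\<in>bitstrings n. ?g x c * ?g x c') = sc n f * sc n f * (\<Sum>x\<in>bitstrings n. chi (supp x) (sd (Dc Y0 c) (Dc Y0 c')))"
        using Y0f by (simp add: sum_distrib_left chi_sd mult_ac)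
      finally show "(\<Sum>x\<in>bitstrings n. complex_of_real (?g x c * ?g x c') * (cnj (?a c) * ?a c'))
          = complex_of_real (sc n f * sc n f * (\<Sum>x\<in>bitstrings n. chi (supp x) (sd (Dc Y0 c) (Dc Y0 c')))) * (cnj (?a c) * ?a c')" .
    qed
    finally show ?thesis .
  qed
  also have "\<dots> = (\<Sum>c\<in>?C. \<Sum>c'\<in>?C. if c = c' then complex_of_real (sc n f * sc n f * 2 ^ n) * (cnj (?a c) * ?a c) else 0)"
  proof (intro sum.cong refl)
    fix c c' assume c: "c \<in> ?C" and c': "c' \<in> ?C"
    have "sd (Dc Y0 c) (Dc Y0 c') \<subseteq> {..<n}" using Dsub[OF c] Dsub[OF c'] by (rule sd_sub)
    moreover have "sd (Dc Y0 c) (Dc Y0 c') = {} \<longleftrightarrow> c = c'"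
      using Dc_inj[OF c c'] by (auto simp: sd_empty_iff)
    ultimately show "complex_of_real (sc n f * sc n f * (\<Sum>x\<in>bitstrings n. chi (supp x) (sd (Dc Y0 c) (Dc Y0 c')))) * (cnj (?a c) * ?a c')
       = (if c = c' then complex_of_real (sc n f * sc n f * 2 ^ n) * (cnj (?a c) * ?a c) else 0)"
      by (simp add: sum_bits_chi)
  qed
  also have "\<dots> = (\<Sum>c\<in>?C. complex_of_real (sc n f * sc n f * 2 ^ n) * (cnj (?a c) * ?a c))"
    using C_fin by (simp add: sum.delta)
  also have "\<dots> = complex_of_real (sc n f * sc n f * 2 ^ n * (\<Sum>c\<in>?C. (cmod (?a c))^2))"
    by (simp add: cnj_mult_self sum_distrib_left)
  finally show ?thesis by (simp only: of_real_eq_iff)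
qed

end

definition Emat :: "nat \<Rightarrow> (bool list \<Rightarrow> bool) \<Rightarrow> nat \<Rightarrow> nat set \<Rightarrow> nat list \<times> nat \<Rightarrow> nat list \<times> nat \<Rightarrow> complex" where
  "Emat n f r Y0 = (\<lambda>j l. complex_of_real (1 / real (card (S_f n f))) *
     (\<Sum>x\<in>{x\<in>bitstrings n. f x}. oracle_apply x (psi n f r Y0) j * cnj (oracle_apply x (psi n f r Y0) l)))"

lemma cinner_self: "cinner A v v = complex_of_real (\<Sum>j\<in>A. (cmod (v j))^2)"
proof -
  have "cinner A v v = (\<Sum>j\<in>A. complex_of_real ((cmod (v j))^2))"
    unfolding cinner_def by (simp add: cnj_mult_self)
  also have "\<dots> = complex_of_real (\<Sum>j\<in>A. (cmod (v j))^2)" by (rule of_real_sum[symmetric])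
  finally show ?thesis .
qed

lemma xor_in_S_eq: assumes "x \<in> bitstrings n" "y \<in> bitstrings n" "xor_bits x y \<in> S_f n f" shows "f x = f y"
proof -
  have "\<forall>w\<in>bitstrings n. f w = f (xor_bits w (xor_bits x y))" using assms(3) unfolding S_f_def by simp
  hence "f x = f (xor_bits x (xor_bits x y))" using assms(1) by blast
  moreover have "xor_bits x (xor_bits x y) = y" using assms(1,2) by (simp add: bitstrings_def xor_cancel)
  ultimately show ?thesis by simp
qed

context
  fixes n :: nat and f :: "bool list \<Rightarrow> bool" and r :: nat and Y0 :: "nat set"
  assumes Y0s: "Y0 \<subseteq> {..<n}" and rbound: "\<forall>c\<in>perp n (S_f n f). card (Dc Y0 c) \<le> r"
begin

lemmas reidx3 = reidx[OF Y0s rbound] and ip3 = ip[OF Y0s rbound] and bessel3 = bessel[OF Y0s rbound]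
  and L_sub3 = L_sub[OF Y0s rbound] and psi_norm3 = psi_norm[OF Y0s rbound]

abbreviation "B1 \<equiv> {x\<in>bitstrings n. f x}"

lemma quadEm: "cinner (basis_idx n r 1) v (mat_app (basis_idx n r 1) (Emat n f r Y0) v) =
  complex_of_real (1 / real (card (S_f n f)) * (\<Sum>x\<in>B1. (cmod (cinner (basis_idx n r 1) (oracle_apply x (psi n f r Y0)) v))^2))"
  unfolding Emat_def by (rule quadE)

lemma psdEm: "psd (basis_idx n r 1) (Emat n f r Y0)"
  unfolding psd_def quadEm by (auto intro!: sum_nonneg divide_nonneg_nonneg)

lemma bound: "1 / real (card (S_f n f)) * (\<Sum>x\<in>B1. (cmod (cinner (basis_idx n r 1) (oracle_apply x (psi n f r Y0)) v))^2)
   \<le> (\<Sum>j\<in>basis_idx n r 1. (cmod (v j))^2)"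
proof -
  let ?A = "basis_idx n r 1"
  let ?q = "\<lambda>x. (cmod (cinner ?A (oracle_apply x (psi n f r Y0)) v))^2"
  have s0: "card (S_f n f) > 0" by (rule S_card_pos)
  have "(\<Sum>x\<in>B1. ?q x) \<le> (\<Sum>x\<in>bitstrings n. ?q x)"
    by (rule sum_mono2) (simp_all)
  also have "\<dots> = sc n f * sc n f * 2 ^ n * (\<Sum>c\<in>perp n (S_f n f). (cmod (v (idx r Y0 c, 0)))^2)"
    by (rule bessel3)
  also have "(\<Sum>c\<in>perp n (S_f n f). (cmod (v (idx r Y0 c, 0)))^2)
      = (\<Sum>j\<in>?A. if j \<in> LL n f r Y0 then (cmod (v j))^2 else 0)"
    by (subst reidx3) (auto simp: LL_def)
  also have "\<dots> \<le> (\<Sum>j\<in>?A. (cmod (v j))^2)" by (rule sum_mono) auto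
  finally have 1: "(\<Sum>x\<in>B1. ?q x) \<le> sc n f * sc n f * 2 ^ n * (\<Sum>j\<in>?A. (cmod (v j))^2)"
    by (simp add: mult_left_mono)
  have k: "1 / real (card (S_f n f)) * (sc n f * sc n f * 2 ^ n) = 1"
  proof -
    have "sc n f * sc n f * 2 ^ n = sc n f * sc n f * (real (card (S_f n f)) * real (card (perp n (S_f n f))))"
      using card_S_C[of n f] by simp
    also have "\<dots> = real (card (S_f n f)) * (sc n f * sc n f * real (card (perp n (S_f n f))))"
      by (simp only: mult_ac)
    also have "\<dots> = real (card (S_f n f))" using sc_sq[of n f] by simp
    finally show ?thesis using s0 by simp
  qed
  hence "1 / real (card (S_f n f)) * (\<Sum>x\<in>B1. ?q x) \<le> 1 / real (card (S_f n f)) * (sc n f * sc n f * 2 ^ n * (\<Sum>j\<in>?A. (cmod (v j))^2))"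
    using 1 by (intro mult_left_mono) auto
  also have "\<dots> = (1 / real (card (S_f n f)) * (sc n f * sc n f * 2 ^ n)) * (\<Sum>j\<in>?A. (cmod (v j))^2)"
    by (rule mult.assoc[symmetric])
  also have "\<dots> = (\<Sum>j\<in>?A. (cmod (v j))^2)" unfolding k by simp
  finally show ?thesis .
qed

end

context
  fixes n :: nat and f :: "bool list \<Rightarrow> bool" and r :: nat and Y0 :: "nat set"
  assumes Y0s: "Y0 \<subseteq> {..<n}" and rbound: "\<forall>c\<in>perp n (S_f n f). card (Dc Y0 c) \<le> r"
begin

lemmas ip4 = ip[OF Y0s rbound] and quadEm4 = quadEm[OF Y0s rbound] and bound4 = bound[OF Y0s rbound]

lemma psdIEm: "psd (basis_idx n r 1) (\<lambda>j l. (if j = l then 1 else 0) - Emat n f r Y0 j l)"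
  unfolding psd_def
proof
  fix v
  let ?A = "basis_idx n r 1"
  let ?Q = "1 / real (card (S_f n f)) * (\<Sum>x\<in>{x\<in>bitstrings n. f x}. (cmod (cinner ?A (oracle_apply x (psi n f r Y0)) v))^2)"
  have "cinner ?A v (mat_app ?A (\<lambda>j l. (if j = l then 1 else 0) - Emat n f r Y0 j l) v)
      = complex_of_real ((\<Sum>j\<in>?A. (cmod (v j))^2) - ?Q)"
    using cinner_IE[OF finite_basis_idx] quadEm4 cinner_self by simp
  moreover have "?Q \<le> (\<Sum>j\<in>?A. (cmod (v j))^2)" by (rule bound4)
  ultimately show "Im (cinner ?A v (mat_app ?A (\<lambda>j l. (if j = l then 1 else 0) - Emat n f r Y0 j l) v)) = 0 \<and>
        0 \<le> Re (cinner ?A v (mat_app ?A (\<lambda>j l. (if j = l then 1 else 0) - Emat n f r Y0 j l) v))"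
    by simp
qed

lemma accept:
  assumes y: "y \<in> bitstrings n"
  shows "cinner (basis_idx n r 1) (oracle_apply y (psi n f r Y0)) (mat_app (basis_idx n r 1) (Emat n f r Y0) (oracle_apply y (psi n f r Y0)))
     = (if f y then 1 else 0)"
proof -
  let ?A = "basis_idx n r 1"
  let ?B1 = "{x\<in>bitstrings n. f x}"
  let ?T = "{x\<in>?B1. xor_bits x y \<in> S_f n f}"
  have ly: "length y = n" using y by (simp add: bitstrings_def)
  have each: "(cmod (cinner ?A (oracle_apply x (psi n f r Y0)) (oracle_apply y (psi n f r Y0))))^2
      = (if xor_bits x y \<in> S_f n f then 1 else 0)" if x: "x \<in> ?B1" for x
  proof -
    have xb: "x \<in> bitstrings n" using x by simp
    have c: "chi (sd (supp x) (supp y)) Y0 * chi (sd (supp x) (supp y)) Y0 = 1" by (rule chi_sq)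
    have e: "(cmod (complex_of_real t))^2 = t * t" for t by (simp add: power2_eq_square)
    show ?thesis unfolding ip4[OF xb y] e using c by simp
  qed
  have "(\<Sum>x\<in>?B1. (cmod (cinner ?A (oracle_apply x (psi n f r Y0)) (oracle_apply y (psi n f r Y0))))^2)
      = (\<Sum>x\<in>?B1. if xor_bits x y \<in> S_f n f then 1 else 0)"
    by (rule sum.cong[OF refl]) (rule each)
  also have "\<dots> = (\<Sum>x\<in>?T. 1)" by (rule sum.inter_filter[symmetric]) simp
  also have "\<dots> = real (card ?T)" by simp
  finally have sumeq: "(\<Sum>x\<in>?B1. (cmod (cinner ?A (oracle_apply x (psi n f r Y0)) (oracle_apply y (psi n f r Y0))))^2) = real (card ?T)" .
  have cardT: "card ?T = (if f y then card (S_f n f) else 0)"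
  proof (cases "f y")
    case True
    have "?T = (\<lambda>s. xor_bits s y) ` S_f n f"
    proof
      show "?T \<subseteq> (\<lambda>s. xor_bits s y) ` S_f n f"
      proof
        fix x assume x: "x \<in> ?T"
        have "length x = n" using x by (simp add: bitstrings_def)
        hence "x = xor_bits (xor_bits x y) y" using ly by (simp add: xor_cancel2)
        thus "x \<in> (\<lambda>s. xor_bits s y) ` S_f n f" using x by blast
      qed
      show "(\<lambda>s. xor_bits s y) ` S_f n f \<subseteq> ?T"
      proof
        fix x assume "x \<in> (\<lambda>s. xor_bits s y) ` S_f n f"
        then obtain s where s: "s \<in> S_f n f" "x = xor_bits s y" by blast
        have ls: "length s = n" using s(1) subsetD[OF S_sub] by (simp add: bitstrings_def)
        have xb: "x \<in> bitstrings n" using s(2) ls ly by (simp add: bitstrings_def)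
        have xs: "xor_bits x y = s" using s(2) ls ly by (simp add: xor_cancel2)
        have "f x = f y" using xor_in_S_eq[OF xb y] xs s(1) by simp
        thus "x \<in> ?T" using xb xs s(1) True by simp
      qed
    qed
    moreover have "inj_on (\<lambda>s. xor_bits s y) (S_f n f)"
    proof (rule inj_onI)
      fix a b assume ab: "a \<in> S_f n f" "b \<in> S_f n f" "xor_bits a y = xor_bits b y"
      have "length a = n" "length b = n" using ab(1,2) subsetD[OF S_sub] by (auto simp: bitstrings_def)
      thus "a = b" using ab(3) ly by (metis xor_cancel2)
    qed
    ultimately show ?thesis using True by (simp add: card_image)
  next
    case False
    have "?T = {}"
    proof (rule ccontr)
      assume "?T \<noteq> {}"
      then obtain x where x: "x \<in> bitstrings n" "f x" "xor_bits x y \<in> S_f n f" by blast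
      have "f x = f y" by (rule xor_in_S_eq[OF x(1) y x(3)])
      thus False using x(2) False by simp
    qed
    thus ?thesis using False by simp
  qed
  show ?thesis
    unfolding quadEm4 sumeq cardT using S_card_pos[of n f] by simp
qed

end

lemma upper_bound: "na_exact_computes n f (covering_radius n (perp n (S_f n f)))"
proof -
  let ?C = "perp n (S_f n f)"
  let ?R = "(\<lambda>x. Max ((\<lambda>y. hamming x y) ` ?C)) ` bitstrings n"
  have "bitstrings n \<noteq> {}" using zeros_bits[of n] by (metis empty_iff)
  hence "Min ?R \<in> ?R" by (intro Min_in) auto
  then obtain T0 where T0: "T0 \<in> bitstrings n" "Min ?R = Max ((\<lambda>y. hamming T0 y) ` ?C)"
    by (rule imageE) (rule that, assumption+)
  define r where "r = covering_radius n ?C"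
  define Y0 where "Y0 = supp T0"
  have Y0s: "Y0 \<subseteq> {..<n}" unfolding Y0_def by (rule supp_bits_sub[OF T0(1)])
  have rbound: "\<forall>c\<in>?C. card (Dc Y0 c) \<le> r"
  proof
    fix c assume c: "c \<in> ?C"
    have "length c = n" "length T0 = n" using c T0(1) by (auto simp: perp_def bitstrings_def)
    hence "card (Dc Y0 c) = hamming T0 c" by (simp add: Dc_def Y0_def hamming_supp)
    also have "\<dots> \<le> Max ((\<lambda>y. hamming T0 y) ` ?C)" using C_fin c by (intro Max_ge) auto
    finally show "card (Dc Y0 c) \<le> r" using T0(2) by (simp add: r_def covering_radius_def)
  qed
  have "na_exact_computes n f r"
    unfolding na_exact_computes_def Let_def
  proof (intro exI conjI ballI)
    show "cinner (basis_idx n r 1) (psi n f r Y0) (psi n f r Y0) = 1" by (rule psi_norm[OF Y0s rbound])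
    show "psd (basis_idx n r 1) (Emat n f r Y0)" by (rule psdEm[OF Y0s rbound])
    show "psd (basis_idx n r 1) (\<lambda>j l. (if j = l then 1 else 0) - Emat n f r Y0 j l)" by (rule psdIEm[OF Y0s rbound])
    fix x assume "x \<in> bitstrings n"
    thus "cinner (basis_idx n r 1) (oracle_apply x (psi n f r Y0)) (mat_app (basis_idx n r 1) (Emat n f r Y0) (oracle_apply x (psi n f r Y0))) = (if f x then 1 else 0)"
      by (rule accept[OF Y0s rbound])
  qed
  thus ?thesis by (simp add: r_def)
qed

theorem theorem7p2:
  fixes n :: nat and f :: "bool list \<Rightarrow> bool"
  shows "QE_na n f = covering_radius n (perp n (S_f n f))"
  unfolding QE_na_def
  by (rule Least_equality, rule upper_bound, erule lower_bound)


end
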